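(* Let $A\subseteq\mathbb{F}_2^n\setminus\{0\}$ have size $q$, and let $a=\lceil\log(q+1)\rceil$. Then $A$ contains at least \[ \prod_{j=0}^{a-1}(q+1-2^j) \] ordered linearly independent $a$-tuples (i.e., tuples $(v_1,\dots,v_a)\in A^a$ with $v_1,\dots,v_a$ linearly independent over $\mathbb{F}_2$).
   Context: $\log$ denotes the base-$2$ logarithm. *)

theory Defs
  imports "HOL-Analysis.Analysis" "HOL-Library.Z2"
begin

text \<open>Vectors of F_2^n are modelled as bit ^ 'n; linear independence over F_2 is the
library notion vec.independent for the F_2-vector space structure given by scalar multiplication.\<close>

definition indep_tuples :: "(bit ^ 'n) set \<Rightarrow> nat \<Rightarrow> (bit ^ 'n) list set" where
  "indep_tuples A k = {vs. length vs = k \<and> set vs \<subseteq> A \<and> distinct vs \<and> vec.independent (set vs)}"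

end

theory Submission
  imports Defs
begin

lemma UNIV_bit: "(UNIV :: bit set) = {0, 1}"
  by (auto intro: bit.exhaust)

instance bit :: finite
  by standard (simp add: UNIV_bit)

lemma card_span_le:
  fixes S :: "(bit ^ 'n) set"
  assumes "finite S"
  shows "card (vec.span S) \<le> 2 ^ card S"
  using assms
proof (induction S rule: finite_induct)
  case empty
  then show ?case by (simp add: vec.span_empty)
next
  case (insert a S)
  have sub: "vec.span (insert a S) \<subseteq> (\<lambda>(k,y). k *s a + y) ` (UNIV \<times> vec.span S)"
  proof
    fix x assume "x \<in> vec.span (insert a S)"
    then obtain k where k: "x - k *s a \<in> vec.span S" by (auto simp: vec.span_insert)
    then show "x \<in> (\<lambda>(k,y). k *s a + y) ` (UNIV \<times> vec.span S)"
      by (intro image_eqI[where x="(k, x - k *s a)"]) auto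
  qed
  have fin: "finite (vec.span S)" by simp
  have "card (vec.span (insert a S)) \<le> card ((\<lambda>(k,y). k *s a + y) ` (UNIV \<times> vec.span S))"
    by (rule card_mono[OF _ sub]) simp
  also have "\<dots> \<le> card ((UNIV :: bit set) \<times> vec.span S)" 
    by (rule card_image_le[OF finite])
  also have "\<dots> = 2 * card (vec.span S)" by (simp add: card_cartesian_product UNIV_bit)
  also have "\<dots> \<le> 2 * 2 ^ card S" using insert by simp
  finally show ?case using insert by simp
qed

lemma fin_tuples: "finite (indep_tuples (A :: (bit ^ 'n) set) k)"
proof -
  have "indep_tuples A k \<subseteq> {vs. set vs \<subseteq> (UNIV :: (bit ^ 'n) set) \<and> length vs = k}"
    unfolding indep_tuples_def by auto
  moreover have "finite {vs. set vs \<subseteq> (UNIV :: (bit ^ 'n) set) \<and> length vs = k}"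
    by (rule finite_lists_length_eq) simp
  ultimately show ?thesis by (rule finite_subset)
qed

lemma step:
  fixes A :: "(bit ^ 'n) set"
  assumes A0: "0 \<notin> A"
  shows "int (card (indep_tuples A k)) * (int (card A) + 1 - 2 ^ k)
         \<le> int (card (indep_tuples A (Suc k)))"
proof -
  let ?T = "indep_tuples A k"
  let ?U = "\<Union>vs\<in>?T. (\<lambda>v. v # vs) ` (A - vec.span (set vs))"
  have UT: "?U \<subseteq> indep_tuples A (Suc k)"
  proof
    fix xs assume "xs \<in> ?U"
    then obtain vs v where vs: "vs \<in> ?T" and v: "v \<in> A" "v \<notin> vec.span (set vs)"
      and xs: "xs = v # vs" by auto
    have "v \<notin> set vs" using v vec.span_base by blast
    then show "xs \<in> indep_tuples A (Suc k)"
      using vs v xs unfolding indep_tuples_def by (auto simp: vec.independent_insert)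
  qed
  have cU: "card ?U = (\<Sum>vs\<in>?T. card ((\<lambda>v. v # vs) ` (A - vec.span (set vs))))"
    by (rule card_UN_disjoint) (auto simp: fin_tuples)
  have each: "int (card A) + 1 - 2 ^ k \<le> int (card ((\<lambda>v. v # vs) ` (A - vec.span (set vs))))"
    if vs: "vs \<in> ?T" for vs
  proof -
    have cs: "card (set vs) = k" using vs unfolding indep_tuples_def by (auto simp: distinct_card)
    have "card (vec.span (set vs)) \<le> 2 ^ k" using card_span_le[of "set vs"] cs by simp
    moreover have "A \<inter> vec.span (set vs) \<subseteq> vec.span (set vs) - {0}" using A0 by auto
    hence "card (A \<inter> vec.span (set vs)) \<le> card (vec.span (set vs) - {0})"
      by (intro card_mono) auto
    moreover have "card (vec.span (set vs) - {0}) = card (vec.span (set vs)) - 1"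
      by (simp add: vec.span_zero)
    moreover have "card (vec.span (set vs)) \<ge> 1"
      using vec.span_zero[of "set vs"] card_gt_0_iff[of "vec.span (set vs)"] by fastforce
    moreover have "card (A - vec.span (set vs)) + card (A \<inter> vec.span (set vs)) = card A"
      using card_Int_Diff[of A "vec.span (set vs)"] by simp
    moreover have "card ((\<lambda>v. v # vs) ` (A - vec.span (set vs))) = card (A - vec.span (set vs))"
      by (rule card_image) (auto simp: inj_on_def)
    moreover have "int (card (vec.span (set vs))) \<le> 2 ^ k"
      using calculation(1) by (metis of_nat_le_iff of_nat_numeral of_nat_power)
    ultimately show ?thesis by linarith
  qed
  have "int (card ?T) * (int (card A) + 1 - 2 ^ k) = (\<Sum>vs\<in>?T. (int (card A) + 1 - 2 ^ k))"
    by simp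
  also have "\<dots> \<le> (\<Sum>vs\<in>?T. int (card ((\<lambda>v. v # vs) ` (A - vec.span (set vs)))))"
    by (rule sum_mono) (rule each)
  also have "\<dots> = int (card ?U)" using cU by simp
  also have "\<dots> \<le> int (card (indep_tuples A (Suc k)))"
    using card_mono[OF fin_tuples UT] by simp
  finally show ?thesis .
qed

lemma tuples0: "indep_tuples A 0 = {[]}"
  unfolding indep_tuples_def by (auto simp: vec.independent_empty)

theorem lemma2p1:
  fixes A :: "(bit ^ 'n) set" and q :: nat
  assumes "A \<subseteq> UNIV - {0}" and "card A = q"
  shows "(\<Prod>j<nat \<lceil>log 2 (real q + 1)\<rceil>. (int q + 1 - 2 ^ j))
           \<le> int (card (indep_tuples A (nat \<lceil>log 2 (real q + 1)\<rceil>)))"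
proof -
  let ?a = "nat \<lceil>log 2 (real q + 1)\<rceil>"
  have A0: "0 \<notin> A" using assms(1) by auto
  have pos: "int q + 1 - 2 ^ j > 0" if "j < ?a" for j
  proof -
    have "real j < log 2 (real q + 1)" using that by linarith
    hence "2 powr real j < real q + 1" by (simp add: less_log_iff)
    hence "real (2 ^ j) < real q + 1" by (simp add: powr_realpow)
    hence "(2::nat) ^ j < q + 1" by (metis of_nat_1 of_nat_add of_nat_less_iff)
    hence "int ((2::nat) ^ j) < int q + 1" by linarith
    thus ?thesis by simp
  qed
  have "k \<le> ?a \<Longrightarrow> (\<Prod>j<k. (int q + 1 - 2 ^ j)) \<le> int (card (indep_tuples A k))" for k
  proof (induction k)
    case 0
    then show ?case by (simp add: tuples0)
  next
    case (Suc k)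
    have IH: "(\<Prod>j<k. (int q + 1 - 2 ^ j)) \<le> int (card (indep_tuples A k))" using Suc by simp
    have p: "int q + 1 - 2 ^ k > 0" using pos Suc.prems by simp
    have "(\<Prod>j<Suc k. (int q + 1 - 2 ^ j)) = (\<Prod>j<k. (int q + 1 - 2 ^ j)) * (int q + 1 - 2 ^ k)"
      by simp
    also have "\<dots> \<le> int (card (indep_tuples A k)) * (int q + 1 - 2 ^ k)"
      using IH p by (simp add: mult_right_mono)
    also have "\<dots> \<le> int (card (indep_tuples A (Suc k)))"
      using step[OF A0, of k] assms(2) by simp
    finally show ?case .
  qed
  thus ?thesis by simp
qed

end
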